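(* Let $\Phi(L,W,S,B)$ with $L\le c_1$, $2\le W\le c_2N$, $S\le c_2N$, $1\le B\le c_2N$ for constants $c_1,c_2$ and $N$ sufficiently large, and let $\nabla\Phi(L,W,S,B)=\{x\mapsto\|\nabla F(x)\|:F\in\Phi(L,W,S,B)\}$. Then there is a constant $C$ depending only on $d,c_1$ such that for all $\delta\in(0,1)$ $$\log\mathcal N\big(\delta,\nabla\Phi(L,W,S,B),\|\cdot\|_\infty\big)\le C\,S\big[\log(\delta^{-1})+3^L\log(WB)\big],$$ where $\|g\|_\infty=\sup_{x\in\Omega}|g(x)|$.
   Context: $\Omega=[0,1]^d$. For integers $L,W,S\ge1$ and $B>0$, $\Phi(L,W,S,B)$ is the set of functions $F:\mathbb R^d\to\mathbb R$ of the form $F=(\mathcal W^{(L)}\eta_3(\cdot)+b^{(L)})\circ\cdots\circ(\mathcal W^{(2)}\eta_3(\cdot)+b^{(2)})\circ(\mathcal W^{(1)}x+b^{(1)})$, where $\eta_3(t)=\max\{t,0\}^3$ acts componentwise, $\mathcal W^{(1)}\in\mathbb R^{W\times d}$, $b^{(1)}\in\mathbb R^W$, $\mathcal W^{(l)}\in\mathbb R^{W\times W}$, $b^{(l)}\in\mathbb R^W$ for $1<l<L$, $\mathcal W^{(L)}\in\mathbb R^{1\times W}$, $b^{(L)}\in\mathbb R$, the total number of nonzero entries of all $\mathcal W^{(l)},b^{(l)}$ is at most $S$, and all entries have absolute value at most $B$. $\|\nabla F(x)\|$ is the Euclidean norm of the gradient. $\mathcal N(\delta,A,\|\cdot\|)$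 is the minimal number of $\|\cdot\|$-balls of radius $\delta$ centered in $A$ needed to cover $A$. *)

theory Defs
  imports "HOL-Analysis.Analysis" "HOL-Library.Extended_Nat"
begin

definition eta3 :: "real \<Rightarrow> real" where
  "eta3 t = (max t 0) ^ 3"

definition rows :: "nat \<Rightarrow> nat \<Rightarrow> nat \<Rightarrow> nat" where
  "rows L W l = (if l = L then 1 else W)"

text \<open>Pre-activation values of layer l (l \<ge> 1) at input x.
  A i is row i of the first weight matrix W^(1); M l i j is entry (i,j) of W^(l) for l \<ge> 2;
  b l i is entry i of b^(l).\<close>
fun layer_val :: "nat \<Rightarrow> (nat \<Rightarrow> real^'d) \<Rightarrow> (nat \<Rightarrow> nat \<Rightarrow> nat \<Rightarrow> real)
    \<Rightarrow> (nat \<Rightarrow> nat \<Rightarrow> real) \<Rightarrow> nat \<Rightarrow> real^'d \<Rightarrow> nat \<Rightarrow> real" where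
  "layer_val W A M b 0 x i = 0"
| "layer_val W A M b (Suc 0) x i = A i \<bullet> x + b 1 i"
| "layer_val W A M b (Suc (Suc l)) x i =
     (\<Sum>j<W. M (Suc (Suc l)) i j * eta3 (layer_val W A M b (Suc l) x j)) + b (Suc (Suc l)) i"

definition nnz :: "nat \<Rightarrow> nat \<Rightarrow> (nat \<Rightarrow> real^'d) \<Rightarrow> (nat \<Rightarrow> nat \<Rightarrow> nat \<Rightarrow> real)
    \<Rightarrow> (nat \<Rightarrow> nat \<Rightarrow> real) \<Rightarrow> nat" where
  "nnz L W A M b =
     card {(i, j). i < rows L W 1 \<and> A i $ j \<noteq> 0}
     + (\<Sum>l\<in>{2..L}. card {(i, j). i < rows L W l \<and> j < W \<and> M l i j \<noteq> 0})
     + (\<Sum>l\<in>{1..L}. card {i. i < rows L W l \<and> b l i \<noteq> 0})"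

definition Phi :: "nat \<Rightarrow> nat \<Rightarrow> nat \<Rightarrow> real \<Rightarrow> (real^'d \<Rightarrow> real) set" where
  "Phi L W S B = {F. \<exists>A M b.
      (\<forall>i < rows L W 1. \<forall>j. \<bar>A i $ j\<bar> \<le> B)
    \<and> (\<forall>l\<in>{2..L}. \<forall>i < rows L W l. \<forall>j < W. \<bar>M l i j\<bar> \<le> B)
    \<and> (\<forall>l\<in>{1..L}. \<forall>i < rows L W l. \<bar>b l i\<bar> \<le> B)
    \<and> nnz L W A M b \<le> S
    \<and> F = (\<lambda>x. layer_val W A M b L x 0)}"

definition grad :: "(real^'d \<Rightarrow> real) \<Rightarrow> real^'d \<Rightarrow> real^'d" where
  "grad F x = (\<chi> i. frechet_derivative F (at x) (axis i 1))"

definition gradPhi :: "nat \<Rightarrow> nat \<Rightarrow> nat \<Rightarrow> real \<Rightarrow> (real^'d \<Rightarrow> real) set" where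
  "gradPhi L W S B = (\<lambda>F x. norm (grad F x)) ` Phi L W S B"

definition Omega :: "(real^'d) set" where
  "Omega = {x. \<forall>i. 0 \<le> x $ i \<and> x $ i \<le> 1}"

definition sup_dist :: "(real^'d \<Rightarrow> real) \<Rightarrow> (real^'d \<Rightarrow> real) \<Rightarrow> real" where
  "sup_dist g h = (SUP x\<in>Omega. \<bar>g x - h x\<bar>)"

text \<open>Covering number: minimal number of (closed) balls of radius delta centered in A
  covering A (infinity if no finite cover exists).\<close>
definition covering_number :: "real \<Rightarrow> 'a set \<Rightarrow> ('a \<Rightarrow> 'a \<Rightarrow> real) \<Rightarrow> enat" where
  "covering_number \<delta> A d = Inf {enat (card T) | T. finite T \<and> T \<subseteq> A \<and>
      (\<forall>g\<in>A. \<exists>t\<in>T. d g t \<le> \<delta>)}"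

end

theory Submission
  imports Defs
begin

definition deta :: "real \<Rightarrow> real" where "deta t = 3 * (max t 0)^2"

lemma eta3_deriv: "(eta3 has_real_derivative deta t) (at t)"
proof (cases "t = 0")
  case True
  show ?thesis unfolding True deta_def
  proof (rule has_field_derivative_iff[THEN iffD2])
    have e: "(\<lambda>y::real. (max y 0)^2) = (\<lambda>y. ((y + abs y)/2)^2)" by (auto simp: max_def fun_eq_iff)
    have "isCont (\<lambda>y::real. ((y + abs y)/2)^2) 0" by (intro continuous_intros) auto
    then have "isCont (\<lambda>y::real. (max y 0)^2) 0" unfolding e .
    then have "((\<lambda>y::real. (max y 0)^2) \<longlongrightarrow> (max 0 0)^2) (at 0)"
      by (simp add: isCont_def)
    moreover have "\<And>y. y \<noteq> 0 \<Longrightarrow> (eta3 y - eta3 0) / (y - 0) = (max y 0)^2"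
      by (auto simp: eta3_def power3_eq_cube power2_eq_square max_def)
    ultimately show "((\<lambda>y. (eta3 y - eta3 0) / (y - 0)) \<longlongrightarrow> 3 * (max 0 0)\<^sup>2) (at 0)"
      using LIM_equal[of 0 "\<lambda>y. (eta3 y - eta3 0) / (y - 0)" "\<lambda>y::real. (max y 0)^2" 0] by simp
  qed
next
  case False
  show ?thesis
  proof (cases "t > 0")
    case True
    have d: "((\<lambda>y. y^3) has_real_derivative deta t) (at t)"
      using True by (auto intro!: derivative_eq_intros simp: deta_def)
    show ?thesis
      by (rule has_field_derivative_transform_within_open[OF d, of "{0<..}"]) (use True in \<open>auto simp: eta3_def\<close>)
  next
    case F2: False
    with False have t: "t < 0" by simp
    have d: "((\<lambda>y. 0) has_real_derivative deta t) (at t)"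
      using t by (auto intro!: derivative_eq_intros simp: deta_def)
    show ?thesis
      by (rule has_field_derivative_transform_within_open[OF d, of "{..<0}"]) (use t in \<open>auto simp: eta3_def\<close>)
  qed
qed

fun dlayer :: "nat \<Rightarrow> (nat \<Rightarrow> real^'d) \<Rightarrow> (nat \<Rightarrow> nat \<Rightarrow> nat \<Rightarrow> real)
    \<Rightarrow> (nat \<Rightarrow> nat \<Rightarrow> real) \<Rightarrow> nat \<Rightarrow> real^'d \<Rightarrow> nat \<Rightarrow> real^'d" where
  "dlayer W A M b 0 x i = 0"
| "dlayer W A M b (Suc 0) x i = A i"
| "dlayer W A M b (Suc (Suc l)) x i =
     (\<Sum>j<W. (M (Suc (Suc l)) i j * deta (layer_val W A M b (Suc l) x j)) *\<^sub>R dlayer W A M b (Suc l) x j)"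

lemma eta3_has_derivative: "(eta3 has_derivative (\<lambda>h. deta t * h)) (at t)"
  using eta3_deriv[of t] by (simp add: has_field_derivative_def)

lemma layer_deriv:
  "((\<lambda>x. layer_val W A M b (Suc l) x i) has_derivative (\<lambda>h. dlayer W A M b (Suc l) x i \<bullet> h)) (at x)"
proof (induction l arbitrary: i)
  case 0
  show ?case by (auto intro!: derivative_eq_intros)
next
  case (Suc l)
  have e: "\<And>j. ((\<lambda>x. eta3 (layer_val W A M b (Suc l) x j)) has_derivative
     (\<lambda>h. deta (layer_val W A M b (Suc l) x j) * (dlayer W A M b (Suc l) x j \<bullet> h))) (at x)"
    using has_derivative_compose[OF Suc.IH eta3_has_derivative] by simp
  show ?case
    apply simp
    apply (rule derivative_eq_intros has_derivative_sum e | simp)+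
    apply (simp add: inner_sum_left algebra_simps)
    done
qed

lemma grad_layer:
  "grad (\<lambda>x. layer_val W A M b (Suc l) x i) x = dlayer W A M b (Suc l) x i"
proof -
  have f: "frechet_derivative (\<lambda>x. layer_val W A M b (Suc l) x i) (at x) = (\<lambda>h. dlayer W A M b (Suc l) x i \<bullet> h)"
    by (rule frechet_derivative_at[OF layer_deriv, symmetric])
  show ?thesis
    unfolding grad_def f by (simp add: vec_eq_iff inner_axis)
qed

lemma maxpq: fixes a b s :: real assumes "\<bar>a\<bar> \<le> s" "\<bar>b\<bar> \<le> s"
  shows "0 \<le> max a 0" "max a 0 \<le> s" "0 \<le> max b 0" "max b 0 \<le> s" "\<bar>max a 0 - max b 0\<bar> \<le> \<bar>a - b\<bar>"
  using assms by (auto simp: max_def abs_if split: if_splits)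

lemma eta3_bound: fixes a s :: real assumes "\<bar>a\<bar> \<le> s" shows "\<bar>eta3 a\<bar> \<le> s^3"
proof -
  have "0 \<le> max a 0" "max a 0 \<le> s" using assms by auto
  then show ?thesis unfolding eta3_def by (simp add: power_mono)
qed

lemma deta_bound: fixes a s :: real assumes "\<bar>a\<bar> \<le> s" shows "0 \<le> deta a" "deta a \<le> 3* s^2"
proof -
  have "0 \<le> max a 0" "max a 0 \<le> s" using assms by auto
  then show "0 \<le> deta a" "deta a \<le> 3* s^2" unfolding deta_def by (simp_all add: power_mono)
qed

lemma eta3_lip: fixes a b s :: real assumes "\<bar>a\<bar> \<le> s" "\<bar>b\<bar> \<le> s"
  shows "\<bar>eta3 a - eta3 b\<bar> \<le> 3* s^2*\<bar>a - b\<bar>"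
proof -
  define p where "p = max a 0"
  define q where "q = max b 0"
  note h = maxpq[OF assms, folded p_def q_def]
  have "eta3 a - eta3 b = (p - q) * (p^2 + p*q + q^2)"
    unfolding eta3_def p_def[symmetric] q_def[symmetric] by (simp add: algebra_simps power2_eq_square power3_eq_cube)
  then have "\<bar>eta3 a - eta3 b\<bar> = \<bar>p - q\<bar> * (p^2 + p*q + q^2)"
    using h by (simp add: abs_mult)
  also have "\<dots> \<le> \<bar>a - b\<bar> * (3* s^2)"
  proof (rule mult_mono)
    have "p^2 \<le> s^2" "q^2 \<le> s^2" using h by (auto intro: power_mono)
    moreover have "p*q \<le> s* s" using h by (intro mult_mono) auto
    ultimately show "p^2 + p*q + q^2 \<le> 3* s^2" by (simp add: power2_eq_square)
  qed (use h in auto)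
  finally show ?thesis by (simp add: mult.commute)
qed

lemma deta_lip: fixes a b s :: real assumes "\<bar>a\<bar> \<le> s" "\<bar>b\<bar> \<le> s"
  shows "\<bar>deta a - deta b\<bar> \<le> 6* s*\<bar>a - b\<bar>"
proof -
  define p where "p = max a 0"
  define q where "q = max b 0"
  note h = maxpq[OF assms, folded p_def q_def]
  have "deta a - deta b = 3 * ((p - q) * (p + q))"
    unfolding deta_def p_def[symmetric] q_def[symmetric] by (simp add: algebra_simps power2_eq_square)
  then have "\<bar>deta a - deta b\<bar> = 3 * (\<bar>p - q\<bar> * (p + q))"
    using h by (simp only: abs_mult)
  also have "\<bar>p - q\<bar> * (p + q) \<le> \<bar>a - b\<bar> * (2* s)"
    by (rule mult_mono) (use h in auto)
  finally show ?thesis by (simp add: algebra_simps)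
qed

lemma inner_bound: fixes a x :: "real^'d"
  assumes x: "x \<in> Omega" and a: "\<And>k. \<bar>a $ k\<bar> \<le> c"
  shows "\<bar>a \<bullet> x\<bar> \<le> real CARD('d) * c"
proof -
  have "\<bar>a \<bullet> x\<bar> = \<bar>\<Sum>k\<in>UNIV. a $ k * x $ k\<bar>" by (simp add: inner_vec_def)
  also have "\<dots> \<le> (\<Sum>k\<in>UNIV. \<bar>a $ k * x $ k\<bar>)" by (rule sum_abs)
  also have "\<dots> \<le> (\<Sum>k\<in>(UNIV::'d set). c)"
  proof (rule sum_mono)
    fix k
    have "\<bar>x $ k\<bar> \<le> 1" using x by (auto simp: Omega_def)
    then have "\<bar>a $ k\<bar> * \<bar>x $ k\<bar> \<le> c * 1" by (intro mult_mono) (auto intro: order_trans[OF _ a] simp: a)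
    then show "\<bar>a $ k * x $ k\<bar> \<le> c" by (simp add: abs_mult)
  qed
  finally show ?thesis by simp
qed

lemma norm_bound_cart: fixes a :: "real^'d"
  assumes a: "\<And>k. \<bar>a $ k\<bar> \<le> c"
  shows "norm a \<le> real CARD('d) * c"
proof -
  have "norm a \<le> (\<Sum>k\<in>UNIV. \<bar>a $ k\<bar>)" by (rule norm_le_l1_cart)
  also have "\<dots> \<le> (\<Sum>k\<in>(UNIV::'d set). c)" by (rule sum_mono) (rule a)
  finally show ?thesis by simp
qed

lemma term_v: fixes m v s B :: real
  assumes "\<bar>m\<bar> \<le> B" "\<bar>v\<bar> \<le> s"
  shows "\<bar>m * eta3 v\<bar> \<le> B * s^3"
  unfolding abs_mult by (rule mult_mono) (use assms eta3_bound in auto)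

lemma term_g: fixes m v s B :: real and g :: "real^'d"
  assumes "\<bar>m\<bar> \<le> B" "\<bar>v\<bar> \<le> s" "norm g \<le> s"
  shows "norm ((m * deta v) *\<^sub>R g) \<le> B * (3 * s^2) * s"
proof -
  have d: "0 \<le> deta v" "deta v \<le> 3 * s^2" using deta_bound[OF assms(2)] by auto
  have "\<bar>m * deta v\<bar> \<le> B * (3 * s^2)"
    unfolding abs_mult using d by (intro mult_mono) (use assms in auto)
  then show ?thesis by (simp only: norm_scaleR) (rule mult_mono, use assms in auto)
qed

lemma term_dv: fixes m m' v v' s B \<epsilon> :: real
  assumes m: "\<bar>m\<bar> \<le> B" "\<bar>m'\<bar> \<le> B" and v: "\<bar>v\<bar> \<le> s" "\<bar>v'\<bar> \<le> s"
    and dm: "\<bar>m - m'\<bar> \<le> \<epsilon>" and dv: "\<bar>v - v'\<bar> \<le> s * \<epsilon>" and e: "0 \<le> \<epsilon>"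
  shows "\<bar>m * eta3 v - m' * eta3 v'\<bar> \<le> (1 + 3 * B) * s^3 * \<epsilon>"
proof -
  have s: "0 \<le> s" using v by auto
  have "m * eta3 v - m' * eta3 v' = (m - m') * eta3 v + m' * (eta3 v - eta3 v')" by (simp add: algebra_simps)
  then have "\<bar>m * eta3 v - m' * eta3 v'\<bar> \<le> \<bar>m - m'\<bar> * \<bar>eta3 v\<bar> + \<bar>m'\<bar> * \<bar>eta3 v - eta3 v'\<bar>"
    by (simp add: abs_mult[symmetric] abs_triangle_ineq)
  also have "\<dots> \<le> \<epsilon> * s^3 + B * (3 * s^2 * (s * \<epsilon>))"
  proof (rule add_mono)
    show "\<bar>m - m'\<bar> * \<bar>eta3 v\<bar> \<le> \<epsilon> * s^3" by (rule mult_mono) (use dm eta3_bound[OF v(1)] e in auto)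
    have "\<bar>eta3 v - eta3 v'\<bar> \<le> 3 * s^2 * (s * \<epsilon>)"
      using eta3_lip[OF v] dv by (meson mult_left_mono order_trans zero_le_mult_iff zero_le_numeral zero_le_power2)
    then show "\<bar>m'\<bar> * \<bar>eta3 v - eta3 v'\<bar> \<le> B * (3 * s^2 * (s * \<epsilon>))" by (rule mult_mono[OF m(2)]) (use m s e in auto)
  qed
  also have "\<dots> = (1 + 3 * B) * s^3 * \<epsilon>" by (simp add: algebra_simps power2_eq_square power3_eq_cube)
  finally show ?thesis .
qed

lemma term_dg: fixes m m' v v' s B \<epsilon> :: real and g g' :: "real^'d"
  assumes m: "\<bar>m\<bar> \<le> B" "\<bar>m'\<bar> \<le> B" and v: "\<bar>v\<bar> \<le> s" "\<bar>v'\<bar> \<le> s"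
    and g: "norm g \<le> s" "norm g' \<le> s"
    and dm: "\<bar>m - m'\<bar> \<le> \<epsilon>" and dv: "\<bar>v - v'\<bar> \<le> s * \<epsilon>" and dg: "norm (g - g') \<le> s * \<epsilon>"
    and e: "0 \<le> \<epsilon>"
  shows "norm ((m * deta v) *\<^sub>R g - (m' * deta v') *\<^sub>R g') \<le> (3 + 9 * B) * s^3 * \<epsilon>"
proof -
  have s: "0 \<le> s" using v by auto
  have B: "0 \<le> B" using m by auto
  have d: "0 \<le> deta v" "deta v \<le> 3 * s^2" using deta_bound[OF v(1)] by auto
  have d': "0 \<le> deta v'" "deta v' \<le> 3 * s^2" using deta_bound[OF v(2)] by auto
  have "m * deta v - m' * deta v' = (m - m') * deta v + m' * (deta v - deta v')" by (simp add: algebra_simps)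
  then have "\<bar>m * deta v - m' * deta v'\<bar> \<le> \<bar>m - m'\<bar> * \<bar>deta v\<bar> + \<bar>m'\<bar> * \<bar>deta v - deta v'\<bar>"
    by (simp add: abs_mult[symmetric] abs_triangle_ineq)
  also have "\<dots> \<le> \<epsilon> * (3 * s^2) + B * (6 * s * (s * \<epsilon>))"
  proof (rule add_mono)
    show "\<bar>m - m'\<bar> * \<bar>deta v\<bar> \<le> \<epsilon> * (3 * s^2)" by (rule mult_mono) (use dm d e in auto)
    have "\<bar>deta v - deta v'\<bar> \<le> 6 * s * (s * \<epsilon>)"
      using deta_lip[OF v] dv s by (meson mult_left_mono order_trans zero_le_mult_iff zero_le_numeral)
    then show "\<bar>m'\<bar> * \<bar>deta v - deta v'\<bar> \<le> B * (6 * s * (s * \<epsilon>))" by (rule mult_mono[OF m(2)]) (use m s e in auto)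
  qed
  finally have c: "\<bar>m * deta v - m' * deta v'\<bar> \<le> \<epsilon> * (3 * s^2) + B * (6 * s * (s * \<epsilon>))" .
  have c': "\<bar>m' * deta v'\<bar> \<le> B * (3 * s^2)"
    unfolding abs_mult using d' by (intro mult_mono) (use m in auto)
  have "(m * deta v) *\<^sub>R g - (m' * deta v') *\<^sub>R g' = (m * deta v - m' * deta v') *\<^sub>R g + (m' * deta v') *\<^sub>R (g - g')"
    by (simp add: algebra_simps)
  then have "norm ((m * deta v) *\<^sub>R g - (m' * deta v') *\<^sub>R g') \<le> \<bar>m * deta v - m' * deta v'\<bar> * norm g + \<bar>m' * deta v'\<bar> * norm (g - g')"
    by (metis norm_scaleR norm_triangle_ineq)
  also have "\<dots> \<le> (\<epsilon> * (3 * s^2) + B * (6 * s * (s * \<epsilon>))) * s + B * (3 * s^2) * (s * \<epsilon>)"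
    by (intro add_mono mult_mono c c' g dg) (use e s B in auto)
  also have "\<dots> = (3 + 9 * B) * s^3 * \<epsilon>" by (simp add: algebra_simps power2_eq_square power3_eq_cube)
  finally show ?thesis .
qed

lemma sum_abs_bound: fixes f :: "nat \<Rightarrow> real"
  assumes "\<And>j. j < W \<Longrightarrow> \<bar>f j\<bar> \<le> c" shows "\<bar>\<Sum>j<W. f j\<bar> \<le> real W * c"
proof -
  have "\<bar>\<Sum>j<W. f j\<bar> \<le> (\<Sum>j<W. \<bar>f j\<bar>)" by (rule sum_abs)
  also have "\<dots> \<le> (\<Sum>j<W. c)" by (rule sum_mono) (use assms in auto)
  finally show ?thesis by simp
qed

lemma sum_norm_bound: fixes f :: "nat \<Rightarrow> real^'d"
  assumes "\<And>j. j < W \<Longrightarrow> norm (f j) \<le> c" shows "norm (\<Sum>j<W. f j) \<le> real W * c"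
proof -
  have "norm (\<Sum>j<W. f j) \<le> (\<Sum>j<W. norm (f j))" by (rule norm_sum)
  also have "\<dots> \<le> (\<Sum>j<W. c)" by (rule sum_mono) (use assms in auto)
  finally show ?thesis by simp
qed

fun sb :: "real \<Rightarrow> nat \<Rightarrow> real" where
  "sb Q 0 = Q"
| "sb Q (Suc n) = Q * (sb Q n)^3"

lemma sb_ge: "1 \<le> Q \<Longrightarrow> Q \<le> sb Q n"
proof (induction n)
  case (Suc n)
  then have "1 \<le> sb Q n" by simp
  then have "1 \<le> (sb Q n)^3" by simp
  then have "Q * 1 \<le> Q * (sb Q n)^3" using Suc by (intro mult_left_mono) auto
  then show ?case by simp
qed simp

lemma key:
  fixes A A' :: "nat \<Rightarrow> real^'d" and M M' :: "nat \<Rightarrow> nat \<Rightarrow> nat \<Rightarrow> real"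
    and b b' :: "nat \<Rightarrow> nat \<Rightarrow> real" and x :: "real^'d"
  assumes B: "1 \<le> B" and W: "1 \<le> W" and eps: "0 \<le> \<epsilon>" and x: "x \<in> Omega"
    and hA: "\<forall>i<rows L W 1. \<forall>k. \<bar>A i $ k\<bar> \<le> B"
    and hA': "\<forall>i<rows L W 1. \<forall>k. \<bar>A' i $ k\<bar> \<le> B"
    and hdA: "\<forall>i<rows L W 1. \<forall>k. \<bar>A i $ k - A' i $ k\<bar> \<le> \<epsilon>"
    and hM: "\<forall>l\<in>{2..L}. \<forall>i<rows L W l. \<forall>j<W. \<bar>M l i j\<bar> \<le> B"
    and hM': "\<forall>l\<in>{2..L}. \<forall>i<rows L W l. \<forall>j<W. \<bar>M' l i j\<bar> \<le> B"
    and hdM: "\<forall>l\<in>{2..L}. \<forall>i<rows L W l. \<forall>j<W. \<bar>M l i j - M' l i j\<bar> \<le> \<epsilon>"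
    and hb: "\<forall>l\<in>{1..L}. \<forall>i<rows L W l. \<bar>b l i\<bar> \<le> B"
    and hb': "\<forall>l\<in>{1..L}. \<forall>i<rows L W l. \<bar>b' l i\<bar> \<le> B"
    and hdb: "\<forall>l\<in>{1..L}. \<forall>i<rows L W l. \<bar>b l i - b' l i\<bar> \<le> \<epsilon>"
    and Q: "Q = 12 * (real CARD('d) + 1) * real W * B"
  shows "Suc l \<le> L \<Longrightarrow> i < rows L W (Suc l) \<Longrightarrow>
     \<bar>layer_val W A M b (Suc l) x i\<bar> \<le> sb Q (Suc l)
   \<and> \<bar>layer_val W A' M' b' (Suc l) x i\<bar> \<le> sb Q (Suc l)
   \<and> norm (dlayer W A M b (Suc l) x i) \<le> sb Q (Suc l)
   \<and> norm (dlayer W A' M' b' (Suc l) x i) \<le> sb Q (Suc l)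
   \<and> \<bar>layer_val W A M b (Suc l) x i - layer_val W A' M' b' (Suc l) x i\<bar> \<le> sb Q (Suc l) * \<epsilon>
   \<and> norm (dlayer W A M b (Suc l) x i - dlayer W A' M' b' (Suc l) x i) \<le> sb Q (Suc l) * \<epsilon>"
proof (induction l arbitrary: i)
  case 0
  define d where "d = real CARD('d)"
  have d0: "0 \<le> d" by (simp add: d_def)
  have QdB: "(d + 1) * B \<le> Q"
  proof -
    have "(d+1) * B * 1 \<le> (d+1) * B * (12 * W)" using W B d0 by (intro mult_left_mono) auto
    then show ?thesis by (simp add: Q d_def algebra_simps)
  qed
  have Q1: "1 \<le> Q" using QdB B d0 by (smt (verit) mult_le_cancel_right1)
  have sQ: "Q \<le> sb Q 1" using sb_ge[OF Q1, of 1] by simp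
  have i1: "i < rows L W 1" using 0 by simp
  have L1: "1 \<in> {1..L}" using 0 by simp
  have a: "\<And>k. \<bar>A i $ k\<bar> \<le> B" "\<And>k. \<bar>A' i $ k\<bar> \<le> B" "\<And>k. \<bar>(A i - A' i) $ k\<bar> \<le> \<epsilon>"
    using hA hA' hdA i1 by auto
  have bb: "\<bar>b 1 i\<bar> \<le> B" "\<bar>b' 1 i\<bar> \<le> B" "\<bar>b 1 i - b' 1 i\<bar> \<le> \<epsilon>"
    using hb hb' hdb i1 L1 by auto
  have v1: "\<bar>A i \<bullet> x + b 1 i\<bar> \<le> d * B + B"
    using inner_bound[OF x a(1)] bb(1) unfolding d_def by linarith
  have v2: "\<bar>A' i \<bullet> x + b' 1 i\<bar> \<le> d * B + B"
    using inner_bound[OF x a(2)] bb(2) unfolding d_def by linarith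
  have "A i \<bullet> x + b 1 i - (A' i \<bullet> x + b' 1 i) = (A i - A' i) \<bullet> x + (b 1 i - b' 1 i)"
    by (simp add: inner_diff_left)
  then have v3: "\<bar>A i \<bullet> x + b 1 i - (A' i \<bullet> x + b' 1 i)\<bar> \<le> d * \<epsilon> + \<epsilon>"
    using inner_bound[OF x a(3)] bb(3) unfolding d_def by linarith
  have g1: "norm (A i) \<le> d * B" using norm_bound_cart[OF a(1)] by (simp add: d_def)
  have g2: "norm (A' i) \<le> d * B" using norm_bound_cart[OF a(2)] by (simp add: d_def)
  have g3: "norm (A i - A' i) \<le> d * \<epsilon>" using norm_bound_cart[OF a(3)] by (simp add: d_def)
  have Qe: "(d + 1) * \<epsilon> \<le> Q * \<epsilon>"
  proof -
    have "d + 1 \<le> (d+1) * B" using B d0 by simp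
    then show ?thesis using QdB eps by (intro mult_right_mono) auto
  qed
  have se: "Q * \<epsilon> \<le> sb Q 1 * \<epsilon>" using sQ eps by (rule mult_right_mono)
  have e1: "d * B + B = (d+1) * B" by (simp add: algebra_simps)
  have e2: "d * \<epsilon> + \<epsilon> = (d+1) * \<epsilon>" by (simp add: algebra_simps)
  have e3: "d * B \<le> (d+1) * B" "d * \<epsilon> \<le> (d+1) * \<epsilon>" using B eps by (auto intro: mult_right_mono)
  show ?case
    using v1 v2 v3 g1 g2 g3 QdB Qe se sQ e1 e2 e3 by simp
next
  case (Suc l)
  define d where "d = real CARD('d)"
  have d0: "0 \<le> d" by (simp add: d_def)
  have Q1: "1 \<le> Q"
  proof -
    have "12 * (d + 1) * 1 \<le> 12 * (d + 1) * real W" using W d0 by (intro mult_left_mono) auto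
    then have "1 \<le> 12 * (d + 1) * real W" using d0 by (smt (verit))
    then have "1 * 1 \<le> (12 * (d + 1) * W) * B" using B by (intro mult_mono) auto
    then show ?thesis by (simp add: Q d_def)
  qed
  have lL: "Suc l \<le> L" and i: "i < rows L W (Suc (Suc l))" using Suc.prems by auto
  have rW: "rows L W (Suc l) = W" using Suc.prems by (simp add: rows_def)
  define s where "s = sb Q (Suc l)"
  have s1: "1 \<le> s" using sb_ge[OF Q1, of "Suc l"] Q1 unfolding s_def by linarith
  have sQ: "sb Q (Suc (Suc l)) = Q * s^3" by (simp add: s_def)
  define v where "v = (\<lambda>j. layer_val W A M b (Suc l) x j)"
  define v' where "v' = (\<lambda>j. layer_val W A' M' b' (Suc l) x j)"
  define g where "g = (\<lambda>j. dlayer W A M b (Suc l) x j)"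
  define g' where "g' = (\<lambda>j. dlayer W A' M' b' (Suc l) x j)"
  have IH: "\<And>j. j < W \<Longrightarrow> \<bar>v j\<bar> \<le> s \<and> \<bar>v' j\<bar> \<le> s \<and> norm (g j) \<le> s \<and> norm (g' j) \<le> s
     \<and> \<bar>v j - v' j\<bar> \<le> s * \<epsilon> \<and> norm (g j - g' j) \<le> s * \<epsilon>"
    using Suc.IH[OF lL] rW unfolding v_def v'_def g_def g'_def s_def by auto
  define m where "m = (\<lambda>j. M (Suc (Suc l)) i j)"
  define m' where "m' = (\<lambda>j. M' (Suc (Suc l)) i j)"
  have l2: "Suc (Suc l) \<in> {2..L}" "Suc (Suc l) \<in> {1..L}" using Suc.prems by auto
  have hm: "\<And>j. j < W \<Longrightarrow> \<bar>m j\<bar> \<le> B \<and> \<bar>m' j\<bar> \<le> B \<and> \<bar>m j - m' j\<bar> \<le> \<epsilon>"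
    using hM hM' hdM l2 i unfolding m_def m'_def by blast
  define c where "c = b (Suc (Suc l)) i"
  define c' where "c' = b' (Suc (Suc l)) i"
  have hc: "\<bar>c\<bar> \<le> B" "\<bar>c'\<bar> \<le> B" "\<bar>c - c'\<bar> \<le> \<epsilon>"
    using hb hb' hdb l2 i unfolding c_def c'_def by blast+
  have lv: "layer_val W A M b (Suc (Suc l)) x i = (\<Sum>j<W. m j * eta3 (v j)) + c"
    by (simp add: m_def v_def c_def)
  have lv': "layer_val W A' M' b' (Suc (Suc l)) x i = (\<Sum>j<W. m' j * eta3 (v' j)) + c'"
    by (simp add: m'_def v'_def c'_def)
  have dl: "dlayer W A M b (Suc (Suc l)) x i = (\<Sum>j<W. (m j * deta (v j)) *\<^sub>R g j)"
    by (simp add: m_def v_def g_def)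
  have dl': "dlayer W A' M' b' (Suc (Suc l)) x i = (\<Sum>j<W. (m' j * deta (v' j)) *\<^sub>R g' j)"
    by (simp add: m'_def v'_def g'_def)
  define P where "P = real W * (B * s^3)"
  have s3: "1 \<le> s^3" using s1 by simp
  have Ws1: "1 \<le> real W * s^3"
  proof -
    have "1 * 1 \<le> real W * s^3" using W s3 by (intro mult_mono) auto
    then show ?thesis by simp
  qed
  have P1: "B \<le> P" "real W * s^3 \<le> P"
  proof -
    have "B * 1 \<le> B * (real W * s^3)" using Ws1 B by (intro mult_left_mono) auto
    then show "B \<le> P" by (simp add: P_def algebra_simps)
    have "(real W * s^3) * 1 \<le> (real W * s^3) * B" using Ws1 B by (intro mult_left_mono) auto
    then show "real W * s^3 \<le> P" by (simp add: P_def algebra_simps)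
  qed
  have QP: "12 * P \<le> Q * s^3"
  proof -
    have "Q * s^3 = 12 * (d+1) * P" by (simp add: Q P_def d_def algebra_simps)
    moreover have "12 * 1 * P \<le> 12 * (d+1) * P" using d0 P1 B by (intro mult_right_mono) auto
    ultimately show ?thesis by simp
  qed
  have QPe: "12 * P * \<epsilon> \<le> Q * s^3 * \<epsilon>" using QP eps by (rule mult_right_mono)
  have Pe: "\<epsilon> \<le> P * \<epsilon>" "real W * s^3 * \<epsilon> \<le> P * \<epsilon>"
  proof -
    have "1 * \<epsilon> \<le> P * \<epsilon>" using P1 B eps by (intro mult_right_mono) auto
    then show "\<epsilon> \<le> P * \<epsilon>" by simp
    show "real W * s^3 * \<epsilon> \<le> P * \<epsilon>" using P1 eps by (intro mult_right_mono) auto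
  qed
  have "\<bar>\<Sum>j<W. m j * eta3 (v j)\<bar> \<le> real W * (B * s^3)"
  proof (rule sum_abs_bound)
    fix j assume j: "j < W"
    show "\<bar>m j * eta3 (v j)\<bar> \<le> B * s^3" using IH[OF j] hm[OF j] by (intro term_v) auto
  qed
  then have r1: "\<bar>(\<Sum>j<W. m j * eta3 (v j)) + c\<bar> \<le> real W * (B * s^3) + B"
    using hc(1) abs_triangle_ineq[of "\<Sum>j<W. m j * eta3 (v j)" c] by linarith
  have "\<bar>\<Sum>j<W. m' j * eta3 (v' j)\<bar> \<le> real W * (B * s^3)"
  proof (rule sum_abs_bound)
    fix j assume j: "j < W"
    show "\<bar>m' j * eta3 (v' j)\<bar> \<le> B * s^3" using IH[OF j] hm[OF j] by (intro term_v) auto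
  qed
  then have r2: "\<bar>(\<Sum>j<W. m' j * eta3 (v' j)) + c'\<bar> \<le> real W * (B * s^3) + B"
    using hc(2) abs_triangle_ineq[of "\<Sum>j<W. m' j * eta3 (v' j)" c'] by linarith
  have r3: "norm (\<Sum>j<W. (m j * deta (v j)) *\<^sub>R g j) \<le> real W * (B * (3 * s^2) * s)"
  proof (rule sum_norm_bound)
    fix j assume j: "j < W"
    show "norm ((m j * deta (v j)) *\<^sub>R g j) \<le> B * (3 * s^2) * s" using IH[OF j] hm[OF j] by (intro term_g) auto
  qed
  have r4: "norm (\<Sum>j<W. (m' j * deta (v' j)) *\<^sub>R g' j) \<le> real W * (B * (3 * s^2) * s)"
  proof (rule sum_norm_bound)
    fix j assume j: "j < W"
    show "norm ((m' j * deta (v' j)) *\<^sub>R g' j) \<le> B * (3 * s^2) * s" using IH[OF j] hm[OF j] by (intro term_g) auto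
  qed
  have "(\<Sum>j<W. m j * eta3 (v j)) + c - ((\<Sum>j<W. m' j * eta3 (v' j)) + c') =
      (\<Sum>j<W. m j * eta3 (v j) - m' j * eta3 (v' j)) + (c - c')"
    by (simp add: sum_subtractf)
  moreover have "\<bar>\<Sum>j<W. m j * eta3 (v j) - m' j * eta3 (v' j)\<bar> \<le> real W * ((1 + 3 * B) * s^3 * \<epsilon>)"
  proof (rule sum_abs_bound)
    fix j assume j: "j < W"
    show "\<bar>m j * eta3 (v j) - m' j * eta3 (v' j)\<bar> \<le> (1 + 3 * B) * s^3 * \<epsilon>"
      using IH[OF j] hm[OF j] eps by (intro term_dv) auto
  qed
  ultimately have r5: "\<bar>(\<Sum>j<W. m j * eta3 (v j)) + c - ((\<Sum>j<W. m' j * eta3 (v' j)) + c')\<bar>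
      \<le> real W * ((1 + 3 * B) * s^3 * \<epsilon>) + \<epsilon>"
    using hc(3) abs_triangle_ineq[of "\<Sum>j<W. m j * eta3 (v j) - m' j * eta3 (v' j)" "c - c'"] by simp
  have "(\<Sum>j<W. (m j * deta (v j)) *\<^sub>R g j) - (\<Sum>j<W. (m' j * deta (v' j)) *\<^sub>R g' j) =
      (\<Sum>j<W. (m j * deta (v j)) *\<^sub>R g j - (m' j * deta (v' j)) *\<^sub>R g' j)"
    by (simp add: sum_subtractf)
  moreover have "norm (\<Sum>j<W. (m j * deta (v j)) *\<^sub>R g j - (m' j * deta (v' j)) *\<^sub>R g' j) \<le> real W * ((3 + 9 * B) * s^3 * \<epsilon>)"
  proof (rule sum_norm_bound)
    fix j assume j: "j < W"
    show "norm ((m j * deta (v j)) *\<^sub>R g j - (m' j * deta (v' j)) *\<^sub>R g' j) \<le> (3 + 9 * B) * s^3 * \<epsilon>"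
      using IH[OF j] hm[OF j] eps by (intro term_dg) auto
  qed
  ultimately have r6: "norm ((\<Sum>j<W. (m j * deta (v j)) *\<^sub>R g j) - (\<Sum>j<W. (m' j * deta (v' j)) *\<^sub>R g' j))
      \<le> real W * ((3 + 9 * B) * s^3 * \<epsilon>)" by simp
  have "P + B \<le> Q * s^3" using P1 QP B by linarith
  then have a1: "real W * (B * s^3) + B \<le> Q * s^3" unfolding P_def .
  have a3: "real W * (B * (3 * s^2) * s) \<le> Q * s^3"
  proof -
    have "real W * (B * (3 * s^2) * s) = 3 * P" by (simp add: P_def power2_eq_square power3_eq_cube algebra_simps)
    then show ?thesis using QP P1 B by linarith
  qed
  have a5: "real W * ((1 + 3 * B) * s^3 * \<epsilon>) + \<epsilon> \<le> Q * s^3 * \<epsilon>"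
  proof -
    have "real W * ((1 + 3 * B) * s^3 * \<epsilon>) = real W * s^3 * \<epsilon> + 3 * (P * \<epsilon>)" by (simp add: P_def algebra_simps)
    moreover have "Q * s^3 * \<epsilon> \<ge> 12 * (P * \<epsilon>)" using QPe by (simp add: mult.assoc)
    moreover have "0 \<le> P * \<epsilon>" using P1 B eps by simp
    ultimately show ?thesis using Pe by linarith
  qed
  have a6: "real W * ((3 + 9 * B) * s^3 * \<epsilon>) \<le> Q * s^3 * \<epsilon>"
  proof -
    have "real W * ((3 + 9 * B) * s^3 * \<epsilon>) = 3 * (real W * s^3 * \<epsilon>) + 9 * (P * \<epsilon>)" by (simp add: P_def algebra_simps)
    moreover have "Q * s^3 * \<epsilon> \<ge> 12 * (P * \<epsilon>)" using QPe by (simp add: mult.assoc)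
    moreover have "0 \<le> P * \<epsilon>" using P1 B eps by simp
    ultimately show ?thesis using Pe by linarith
  qed
  show ?case unfolding lv lv' dl dl' sQ
    using r1 r2 r3 r4 r5 r6 a1 a3 a5 a6 by linarith
qed

definition mkf :: "('a \<times> 'b::zero) list \<Rightarrow> 'a \<Rightarrow> 'b" where
  "mkf xs x = (case map_of xs x of None \<Rightarrow> 0 | Some v \<Rightarrow> v)"

lemma sparse_subset:
  fixes I :: "'a set" and G :: "'b::zero set"
  assumes I: "finite I" "i0 \<in> I"
  shows "{p. (\<forall>x. x \<notin> I \<longrightarrow> p x = 0) \<and> (\<forall>x\<in>I. p x \<in> G) \<and> card {x\<in>I. p x \<noteq> 0} \<le> S}
     \<subseteq> mkf ` {xs. set xs \<subseteq> I \<times> G \<and> length xs = S}"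
proof
  fix p assume "p \<in> {p. (\<forall>x. x \<notin> I \<longrightarrow> p x = 0) \<and> (\<forall>x\<in>I. p x \<in> G) \<and> card {x\<in>I. p x \<noteq> 0} \<le> S}"
  then have p0: "\<And>x. x \<notin> I \<Longrightarrow> p x = 0" and pG: "\<And>x. x \<in> I \<Longrightarrow> p x \<in> G"
    and pS: "card {x\<in>I. p x \<noteq> 0} \<le> S" by auto
  define K where "K = {x\<in>I. p x \<noteq> 0}"
  have fK: "finite K" using I by (simp add: K_def)
  obtain ks where ks: "set ks = K" "distinct ks" using finite_distinct_list[OF fK] by blast
  have lk: "length ks \<le> S" using pS ks distinct_card[OF ks(2)] by (simp add: K_def)
  define xs where "xs = map (\<lambda>k. (k, p k)) ks @ replicate (S - length ks) (i0, p i0)"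
  have len: "length xs = S" using lk by (simp add: xs_def)
  have st: "set xs \<subseteq> I \<times> G" using ks I pG by (auto simp: xs_def K_def)
  have "mkf xs = p"
  proof
    fix x
    show "mkf xs x = p x"
    proof (cases "x \<in> K")
      case True
      then show ?thesis using ks
        by (auto simp: mkf_def xs_def map_of_map_restrict map_add_def restrict_map_def split: option.splits)
    next
      case False
      then have px: "p x = 0" using p0 by (auto simp: K_def)
      have "map_of (map (\<lambda>k. (k, p k)) ks) x = None" using False ks by (simp add: map_of_map_restrict)
      moreover have "map_of (replicate (S - length ks) (i0, p i0)) x = None \<or>
            map_of (replicate (S - length ks) (i0, p i0)) x = Some (p x)"
      proof -
        have "map_of (replicate n (i0, p i0)) x = None \<or> map_of (replicate n (i0, p i0)) x = Some (p x)" for n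
          by (induction n) auto
        then show ?thesis .
      qed
      ultimately show ?thesis unfolding mkf_def xs_def
        by (auto simp: map_add_def px split: option.splits)
    qed
  qed
  then show "p \<in> mkf ` {xs. set xs \<subseteq> I \<times> G \<and> length xs = S}" using len st by blast
qed

lemma sparse_count:
  fixes I :: "'a set" and G :: "'b::zero set" and S :: nat
  assumes I: "finite I" "i0 \<in> I" and G: "finite G"
  defines "Fs \<equiv> {p. (\<forall>x. x \<notin> I \<longrightarrow> p x = 0) \<and> (\<forall>x\<in>I. p x \<in> G) \<and> card {x\<in>I. p x \<noteq> 0} \<le> S}"
  shows "finite Fs" "card Fs \<le> (card I * card G)^S"
proof -
  have fl: "finite {xs. set xs \<subseteq> I \<times> G \<and> length xs = S}" using I G by (intro finite_lists_length_eq) auto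
  have sub: "Fs \<subseteq> mkf ` {xs. set xs \<subseteq> I \<times> G \<and> length xs = S}" unfolding Fs_def by (rule sparse_subset[OF I])
  show "finite Fs" using finite_subset[OF sub] fl by blast
  have "card Fs \<le> card (mkf ` {xs. set xs \<subseteq> I \<times> G \<and> length xs = S})" using sub fl by (intro card_mono) auto
  also have "\<dots> \<le> card {xs. set xs \<subseteq> I \<times> G \<and> length xs = S}" using fl by (rule card_image_le)
  also have "\<dots> = (card I * card G)^S" using I G by (simp add: card_lists_length_eq card_cartesian_product)
  finally show "card Fs \<le> (card I * card G)^S" .
qed

type_synonym 'd pidx = "(nat \<times> 'd) + ((nat \<times> nat \<times> nat) + (nat \<times> nat))"

definition enc :: "(nat \<Rightarrow> real^'d) \<Rightarrow> (nat \<Rightarrow> nat \<Rightarrow> nat \<Rightarrow> real) \<Rightarrow> (nat \<Rightarrow> nat \<Rightarrow> real) \<Rightarrow> 'd pidx \<Rightarrow> real" where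
  "enc A M b = case_sum (\<lambda>(i,k). A i $ k) (case_sum (\<lambda>(l,i,j). M l i j) (\<lambda>(l,i). b l i))"

definition decA :: "('d pidx \<Rightarrow> real) \<Rightarrow> nat \<Rightarrow> real^'d" where
  "decA p i = (\<chi> k. p (Inl (i,k)))"
definition decM :: "('d pidx \<Rightarrow> real) \<Rightarrow> nat \<Rightarrow> nat \<Rightarrow> nat \<Rightarrow> real" where
  "decM p l i j = p (Inr (Inl (l,i,j)))"
definition decb :: "('d pidx \<Rightarrow> real) \<Rightarrow> nat \<Rightarrow> nat \<Rightarrow> real" where
  "decb p l i = p (Inr (Inr (l,i)))"

lemma enc_dec: fixes p :: "('d::finite) pidx \<Rightarrow> real" shows "enc (decA p) (decM p) (decb p) = p"
proof
  fix x :: "'d pidx"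
  show "enc (decA p) (decM p) (decb p) x = p x"
    by (cases x rule: sum.exhaust; cases "projl x"; cases "projr x")
       (auto simp: enc_def decA_def decM_def decb_def split: sum.splits)
qed

definition Idx :: "nat \<Rightarrow> nat \<Rightarrow> 'd pidx set" where
  "Idx L W = Inl ` {(i,k). i < rows L W 1}
     \<union> Inr ` Inl ` {(l,i,j). l \<in> {2..L} \<and> i < rows L W l \<and> j < W}
     \<union> Inr ` Inr ` {(l,i). l \<in> {1..L} \<and> i < rows L W l}"

lemma rows_le: "1 \<le> W \<Longrightarrow> rows L W l \<le> W" by (simp add: rows_def)

lemma Idx_sub: "Idx L W \<subseteq> Inl ` ({..W} \<times> UNIV)
     \<union> Inr ` Inl ` ({..L} \<times> {..W} \<times> {..<W})
     \<union> Inr ` Inr ` ({..L} \<times> {..W})"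
  by (auto simp: Idx_def rows_def split: if_splits)

lemma finite_Idx: "finite (Idx L W :: ('d::finite) pidx set)"
  by (rule finite_subset[OF Idx_sub]) auto

lemma nnz_enc: "nnz L W A M b = card {x \<in> Idx L W. enc A M b x \<noteq> 0}"
proof -
  define SA where "SA = {(i, j). i < rows L W 1 \<and> A i $ j \<noteq> 0}"
  define TM where "TM = (\<lambda>l. {(i, j). i < rows L W l \<and> j < W \<and> M l i j \<noteq> 0})"
  define Tb where "Tb = (\<lambda>l. {i. i < rows L W l \<and> b l i \<noteq> 0})"
  define SM where "SM = (\<Union>l\<in>{2..L}. (\<lambda>(i,j). (l,i,j)) ` TM l)"
  define Sb where "Sb = (\<Union>l\<in>{1..L}. (\<lambda>i. (l,i)) ` Tb l)"
  have fSA: "finite SA" by (rule finite_subset[of _ "{..<rows L W 1} \<times> UNIV"]) (auto simp: SA_def)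
  have fTM: "finite (TM l)" for l by (rule finite_subset[of _ "{..<rows L W l} \<times> {..<W}"]) (auto simp: TM_def)
  have fTb: "finite (Tb l)" for l by (simp add: Tb_def)
  have cSM: "card SM = (\<Sum>l\<in>{2..L}. card (TM l))"
    unfolding SM_def
    by (subst card_UN_disjoint) (auto simp: fTM inj_on_def intro!: sum.cong card_image)
  have cSb: "card Sb = (\<Sum>l\<in>{1..L}. card (Tb l))"
    unfolding Sb_def
    by (subst card_UN_disjoint) (auto simp: fTb inj_on_def intro!: sum.cong card_image)
  have fSM: "finite SM" unfolding SM_def using fTM by auto
  have fSb: "finite Sb" unfolding Sb_def using fTb by auto
  have eq: "{x \<in> Idx L W. enc A M b x \<noteq> 0} = Inl ` SA \<union> (Inr ` Inl ` SM \<union> Inr ` Inr ` Sb)"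
    by (auto simp: Idx_def enc_def SA_def SM_def Sb_def TM_def Tb_def image_iff)
  have "card {x \<in> Idx L W. enc A M b x \<noteq> 0} = card SA + (card SM + card Sb)"
    unfolding eq using fSA fSM fSb
    by (subst card_Un_disjoint; auto simp: card_image card_Un_disjoint inj_on_def)+
  then show ?thesis unfolding nnz_def cSM cSb SA_def TM_def Tb_def by simp
qed

lemma card_Idx: "card (Idx L W :: ('d::finite) pidx set) \<le> (W+1) * CARD('d) + (L+1)*(W+1)*W + (L+1)*(W+1)"
proof -
  have "card (Idx L W :: 'd pidx set) \<le> card (Inl ` ({..W} \<times> (UNIV::'d set))
     \<union> Inr ` Inl ` ({..L} \<times> {..W} \<times> {..<W})
     \<union> Inr ` Inr ` ({..L} \<times> {..W}) :: 'd pidx set)"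
    by (rule card_mono[OF _ Idx_sub]) auto
  also have "\<dots> \<le> card (Inl ` ({..W} \<times> (UNIV::'d set)) :: 'd pidx set) + card (Inr ` Inl ` ({..L} \<times> {..W} \<times> {..<W}) :: 'd pidx set)
       + card (Inr ` Inr ` ({..L} \<times> {..W}) :: 'd pidx set)"
    by (meson add_mono card_Un_le le_refl order_trans)
  also have "\<dots> = (W+1) * CARD('d) + (L+1)*((W+1)*W) + (L+1)*(W+1)"
    by (simp add: card_image inj_on_def card_cartesian_product)
  finally show ?thesis by (simp add: algebra_simps)
qed

definition rnd :: "real \<Rightarrow> real \<Rightarrow> real" where
  "rnd e t = (if 0 \<le> t then e * of_int \<lfloor>t / e\<rfloor> else - (e * of_int \<lfloor>- t / e\<rfloor>))"

definition grid :: "real \<Rightarrow> real \<Rightarrow> real set" where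
  "grid e B = (\<lambda>k. e * of_int k) ` {- \<lfloor>B / e\<rfloor> .. \<lfloor>B / e\<rfloor>}"

lemma rnd_pos: assumes e: "0 < e" and t: "0 \<le> t"
  shows "0 \<le> e * of_int \<lfloor>t / e\<rfloor>" "e * of_int \<lfloor>t / e\<rfloor> \<le> t" "t - e * of_int \<lfloor>t / e\<rfloor> \<le> e"
proof -
  show "0 \<le> e * of_int \<lfloor>t / e\<rfloor>" using e t by simp
  have "of_int \<lfloor>t / e\<rfloor> \<le> t / e" by (rule of_int_floor_le)
  then have "e * of_int \<lfloor>t / e\<rfloor> \<le> e * (t / e)" using e by (intro mult_left_mono) auto
  then show "e * of_int \<lfloor>t / e\<rfloor> \<le> t" using e by simp
  have "t / e < of_int \<lfloor>t / e\<rfloor> + 1" using floor_correct[of "t / e"] by simp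
  then have "t < e * (of_int \<lfloor>t / e\<rfloor> + 1)" using e by (simp add: field_simps)
  then show "t - e * of_int \<lfloor>t / e\<rfloor> \<le> e" by (simp add: algebra_simps)
qed

lemma rnd_props: assumes e: "0 < e"
  shows "\<bar>rnd e t\<bar> \<le> \<bar>t\<bar>" "\<bar>t - rnd e t\<bar> \<le> e" "rnd e 0 = 0"
proof -
  have "\<bar>rnd e t\<bar> \<le> \<bar>t\<bar> \<and> \<bar>t - rnd e t\<bar> \<le> e"
  proof (cases "0 \<le> t")
    case True
    then show ?thesis using rnd_pos[OF e True] by (auto simp: rnd_def)
  next
    case False
    then have t: "0 \<le> - t" by simp
    then show ?thesis using rnd_pos[OF e t] False by (auto simp: rnd_def)
  qed
  then show "\<bar>rnd e t\<bar> \<le> \<bar>t\<bar>" "\<bar>t - rnd e t\<bar> \<le> e" by auto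
  show "rnd e 0 = 0" by (simp add: rnd_def)
qed

lemma rnd_grid: assumes e: "0 < e" and t: "\<bar>t\<bar> \<le> B"
  shows "rnd e t \<in> grid e B"
proof (cases "0 \<le> t")
  case True
  have "\<lfloor>t / e\<rfloor> \<le> \<lfloor>B / e\<rfloor>" using t e True by (intro floor_mono divide_right_mono) auto
  moreover have "0 \<le> \<lfloor>t / e\<rfloor>" using e True by simp
  ultimately have "- \<lfloor>B / e\<rfloor> \<le> \<lfloor>t / e\<rfloor>" "\<lfloor>t / e\<rfloor> \<le> \<lfloor>B / e\<rfloor>" by linarith+
  then show ?thesis using True unfolding rnd_def grid_def by (intro image_eqI[of _ _ "\<lfloor>t / e\<rfloor>"]) auto
next
  case False
  have "\<lfloor>- t / e\<rfloor> \<le> \<lfloor>B / e\<rfloor>" using t e False by (intro floor_mono divide_right_mono) auto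
  moreover have "0 \<le> \<lfloor>- t / e\<rfloor>"
  proof -
    have "0 \<le> (- t) / e" using e False by (intro divide_nonneg_pos) auto
    then show ?thesis by simp
  qed
  ultimately have "- \<lfloor>B / e\<rfloor> \<le> - \<lfloor>- t / e\<rfloor>" "- \<lfloor>- t / e\<rfloor> \<le> \<lfloor>B / e\<rfloor>" by linarith+
  then show ?thesis using False unfolding rnd_def grid_def by (intro image_eqI[of _ _ "- \<lfloor>- t / e\<rfloor>"]) auto
qed

lemma grid_bound: assumes e: "0 < e" and "g \<in> grid e B" shows "\<bar>g\<bar> \<le> B"
proof -
  obtain k where k0: "k \<in> {- \<lfloor>B / e\<rfloor> .. \<lfloor>B / e\<rfloor>}" "g = e * of_int k" using assms(2) unfolding grid_def by blast
  then have k: "g = e * of_int k" "\<bar>k\<bar> \<le> \<lfloor>B / e\<rfloor>" by auto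
  have "of_int \<bar>k\<bar> \<le> B / e" using k(2) by (meson floor_le_iff le_floor_iff of_int_floor_le order_trans of_int_le_iff)
  then have "e * of_int \<bar>k\<bar> \<le> B" using e by (simp add: field_simps)
  then show ?thesis using k e by (simp add: abs_mult)
qed

lemma grid_zero: "0 \<le> B \<Longrightarrow> 0 < e \<Longrightarrow> (0::real) \<in> grid e B"
  unfolding grid_def by (intro image_eqI[of _ _ 0]) auto

lemma grid_finite: "finite (grid e B)" by (simp add: grid_def)

lemma grid_card: assumes e: "0 < e" "0 \<le> B" shows "real (card (grid e B)) \<le> 2 * B / e + 1"
proof -
  have "card (grid e B) \<le> card {- \<lfloor>B / e\<rfloor> .. \<lfloor>B / e\<rfloor>}" unfolding grid_def by (rule card_image_le) simp
  also have "\<dots> = nat (2 * \<lfloor>B / e\<rfloor> + 1)" by simp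
  finally have "real (card (grid e B)) \<le> real (nat (2 * \<lfloor>B / e\<rfloor> + 1))" by simp
  also have "\<dots> = 2 * of_int \<lfloor>B / e\<rfloor> + 1" using e by simp
  also have "\<dots> \<le> 2 * (B / e) + 1" using of_int_floor_le[of "B / e"] by linarith
  finally show ?thesis by simp
qed

lemma cover:
  fixes L W S :: nat and B \<delta> :: real
  assumes L: "1 \<le> L" and W: "1 \<le> W" and B: "1 \<le> B" and \<delta>: "0 < \<delta>"
  defines "Q \<equiv> 12 * (real CARD('d::finite) + 1) * real W * B"
  defines "\<epsilon> \<equiv> \<delta> / sb Q L"
  shows "\<exists>T. finite T \<and> T \<subseteq> (gradPhi L W S B :: (real^'d \<Rightarrow> real) set)
     \<and> (\<forall>g\<in>gradPhi L W S B. \<exists>t\<in>T. sup_dist g t \<le> \<delta>)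
     \<and> card T \<le> (card (Idx L W :: 'd pidx set) * card (grid \<epsilon> B))^S"
proof -
  obtain l0 where l0: "L = Suc l0" using L by (cases L) auto
  have Q1: "1 \<le> Q"
  proof -
    have "12 * (real CARD('d) + 1) * 1 \<le> 12 * (real CARD('d) + 1) * real W" using W by (intro mult_left_mono) auto
    moreover have "0 \<le> real CARD('d)" by simp
    ultimately have "1 \<le> 12 * (real CARD('d) + 1) * real W" by (smt (verit))
    then have "1 * 1 \<le> (12 * (real CARD('d) + 1) * real W) * B" using B by (intro mult_mono) auto
    then show ?thesis by (simp add: Q_def)
  qed
  have s1: "1 \<le> sb Q L" using sb_ge[OF Q1, of L] Q1 by linarith
  have e0: "0 < \<epsilon>" using s1 \<delta> by (simp add: \<epsilon>_def)
  have se: "sb Q L * \<epsilon> = \<delta>" using s1 by (simp add: \<epsilon>_def)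
  define I where "I = (Idx L W :: 'd pidx set)"
  define G where "G = grid \<epsilon> B"
  define Fs where "Fs = {p. (\<forall>x. x \<notin> I \<longrightarrow> p x = 0) \<and> (\<forall>x\<in>I. p x \<in> G) \<and> card {x\<in>I. p x \<noteq> 0} \<le> S}"
  have i0: "Inr (Inr (1, 0)) \<in> I" using L W by (auto simp: I_def Idx_def rows_def image_iff)
  have fI: "finite I" by (simp add: I_def finite_Idx)
  have fG: "finite G" by (simp add: G_def grid_finite)
  have cnt: "finite Fs" "card Fs \<le> (card I * card G)^S"
    using sparse_count[OF fI i0 fG, of S] unfolding Fs_def by auto
  define hn where "hn = (\<lambda>(p::'d pidx \<Rightarrow> real) (x::real^'d). norm (dlayer W (decA p) (decM p) (decb p) L x 0))"
  define T where "T = hn ` Fs"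
  have GB: "\<And>y. y \<in> G \<Longrightarrow> \<bar>y\<bar> \<le> B" using grid_bound[OF e0] by (auto simp: G_def)
  have sub: "T \<subseteq> gradPhi L W S B"
  proof
    fix t assume "t \<in> T"
    then obtain p where p: "p \<in> Fs" "t = hn p" by (auto simp: T_def)
    have pI: "\<And>x. x \<in> I \<Longrightarrow> \<bar>p x\<bar> \<le> B" using p GB by (auto simp: Fs_def)
    define F where "F = (\<lambda>x. layer_val W (decA p) (decM p) (decb p) L x 0)"
    have "F \<in> Phi L W S B"
      unfolding Phi_def
    proof (intro CollectI exI conjI)
      show "\<forall>i<rows L W 1. \<forall>j. \<bar>decA p i $ j\<bar> \<le> B"
        using pI by (auto simp: decA_def I_def Idx_def)
      show "\<forall>l\<in>{2..L}. \<forall>i<rows L W l. \<forall>j<W. \<bar>decM p l i j\<bar> \<le> B"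
        using pI by (auto simp: decM_def I_def Idx_def)
      show "\<forall>l\<in>{1..L}. \<forall>i<rows L W l. \<bar>decb p l i\<bar> \<le> B"
        using pI by (auto simp: decb_def I_def Idx_def)
      show "nnz L W (decA p) (decM p) (decb p) \<le> S"
        using p(1) unfolding nnz_enc enc_dec by (simp add: Fs_def I_def)
      show "F = (\<lambda>x. layer_val W (decA p) (decM p) (decb p) L x 0)" by (simp add: F_def)
    qed
    moreover have "t = (\<lambda>x. norm (grad F x))"
      unfolding p(2) hn_def F_def l0 grad_layer ..
    ultimately show "t \<in> gradPhi L W S B" unfolding gradPhi_def by blast
  qed
  have cov: "\<forall>g\<in>gradPhi L W S B. \<exists>t\<in>T. sup_dist g t \<le> \<delta>"
  proof
    fix g assume "g \<in> (gradPhi L W S B :: (real^'d \<Rightarrow> real) set)"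
    then obtain F where F: "F \<in> Phi L W S B" "g = (\<lambda>x. norm (grad F x))" by (auto simp: gradPhi_def)
    then obtain A M b where
      hA: "\<forall>i<rows L W 1. \<forall>j. \<bar>A i $ j\<bar> \<le> B" and
      hM: "\<forall>l\<in>{2..L}. \<forall>i<rows L W l. \<forall>j<W. \<bar>M l i j\<bar> \<le> B" and
      hb: "\<forall>l\<in>{1..L}. \<forall>i<rows L W l. \<bar>b l i\<bar> \<le> B" and
      hS: "nnz L W A M b \<le> S" and
      hF: "F = (\<lambda>x. layer_val W A M b L x 0)"
      unfolding Phi_def by blast
    define p where "p = (\<lambda>x. if x \<in> I then rnd \<epsilon> (enc A M b x) else 0)"
    have encB: "\<And>x. x \<in> I \<Longrightarrow> \<bar>enc A M b x\<bar> \<le> B"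
      using hA hM hb by (auto simp: I_def Idx_def enc_def)
    have "p \<in> Fs"
    proof -
      have "{x\<in>I. p x \<noteq> 0} \<subseteq> {x\<in>I. enc A M b x \<noteq> 0}" using rnd_props(3)[OF e0] by (auto simp: p_def)
      then have "card {x\<in>I. p x \<noteq> 0} \<le> card {x\<in>I. enc A M b x \<noteq> 0}" using fI by (intro card_mono) auto
      also have "\<dots> = nnz L W A M b" by (simp add: nnz_enc I_def)
      finally have "card {x\<in>I. p x \<noteq> 0} \<le> S" using hS by simp
      moreover have "\<forall>x\<in>I. p x \<in> G" using encB rnd_grid[OF e0] by (auto simp: p_def G_def)
      ultimately show ?thesis by (auto simp: Fs_def p_def)
    qed
    have hA': "\<forall>i<rows L W 1. \<forall>j. \<bar>decA p i $ j\<bar> \<le> B"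
      and hdA: "\<forall>i<rows L W 1. \<forall>j. \<bar>A i $ j - decA p i $ j\<bar> \<le> \<epsilon>"
      using hA rnd_props[OF e0] by (auto simp: decA_def p_def I_def Idx_def enc_def intro: order_trans)
    have dM: "decM p l i j = rnd \<epsilon> (M l i j)" if "l\<in>{2..L}" "i<rows L W l" "j<W" for l i j
      using that by (auto simp: decM_def p_def I_def Idx_def enc_def)
    have hM': "\<forall>l\<in>{2..L}. \<forall>i<rows L W l. \<forall>j<W. \<bar>decM p l i j\<bar> \<le> B"
    proof (intro ballI allI impI)
      fix l i j assume a: "l\<in>{2..L}" "i<rows L W l" "j<W"
      then have "\<bar>M l i j\<bar> \<le> B" using hM by blast
      then show "\<bar>decM p l i j\<bar> \<le> B" using dM[OF a] rnd_props(1)[OF e0, of "M l i j"] by linarith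
    qed
    have hdM: "\<forall>l\<in>{2..L}. \<forall>i<rows L W l. \<forall>j<W. \<bar>M l i j - decM p l i j\<bar> \<le> \<epsilon>"
      using dM rnd_props(2)[OF e0] by simp
    have hb': "\<forall>l\<in>{1..L}. \<forall>i<rows L W l. \<bar>decb p l i\<bar> \<le> B"
      and hdb: "\<forall>l\<in>{1..L}. \<forall>i<rows L W l. \<bar>b l i - decb p l i\<bar> \<le> \<epsilon>"
      using hb rnd_props[OF e0] by (auto simp: decb_def p_def I_def Idx_def enc_def intro: order_trans)
    have pt: "\<forall>x\<in>Omega. \<bar>g x - hn p x\<bar> \<le> \<delta>"
    proof
      fix x :: "real^'d" assume x: "x \<in> Omega"
      have k: "norm (dlayer W A M b L x 0 - dlayer W (decA p) (decM p) (decb p) L x 0) \<le> sb Q L * \<epsilon>"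
        using key[OF B W less_imp_le[OF e0] x hA hA' hdA hM hM' hdM hb hb' hdb Q_def[THEN meta_eq_to_obj_eq], of l0 0] l0
        by (simp add: rows_def)
      have "g x = norm (dlayer W A M b L x 0)" unfolding F(2) hF l0 grad_layer ..
      then have "\<bar>g x - hn p x\<bar> \<le> norm (dlayer W A M b L x 0 - dlayer W (decA p) (decM p) (decb p) L x 0)"
        by (simp add: hn_def norm_triangle_ineq3)
      then show "\<bar>g x - hn p x\<bar> \<le> \<delta>" using k se by simp
    qed
    have "sup_dist g (hn p) \<le> \<delta>"
      unfolding sup_dist_def
    proof (rule cSUP_least)
      show "Omega \<noteq> {}" by (auto simp: Omega_def intro!: exI[of _ 0])
    qed (use pt in auto)
    then show "\<exists>t\<in>T. sup_dist g t \<le> \<delta>" using \<open>p \<in> Fs\<close> by (auto simp: T_def)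
  qed
  have "card T \<le> card Fs" unfolding T_def using cnt(1) by (rule card_image_le)
  then have "card T \<le> (card I * card G)^S" using cnt by linarith
  moreover have "finite T" using cnt(1) by (simp add: T_def)
  ultimately show ?thesis using sub cov unfolding I_def G_def by blast
qed

lemma covnum:
  assumes "finite T" "T \<subseteq> A" "\<forall>g\<in>A. \<exists>t\<in>T. d g t \<le> \<delta>"
  shows "\<exists>n. covering_number \<delta> A d = enat n \<and> n \<le> card T"
proof -
  have "enat (card T) \<in> {enat (card T) | T. finite T \<and> T \<subseteq> A \<and> (\<forall>g\<in>A. \<exists>t\<in>T. d g t \<le> \<delta>)}"
    using assms by blast
  then have le: "covering_number \<delta> A d \<le> enat (card T)"
    unfolding covering_number_def by (rule Inf_lower)
  then obtain n where "covering_number \<delta> A d = enat n"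
    by (cases "covering_number \<delta> A d") auto
  with le show ?thesis by auto
qed

lemma sb_pow: assumes Q: "1 \<le> Q" shows "sb Q n \<le> Q^(3^(n+1))"
proof -
  have "Q * sb Q n \<le> Q^(3^(n+1))"
  proof (induction n)
    case 0
    have "Q^2 \<le> Q^3" using Q by (intro power_increasing) auto
    then show ?case by (simp add: power2_eq_square)
  next
    case (Suc n)
    have s0: "0 \<le> sb Q n" using sb_ge[OF Q, of n] Q by linarith
    have "Q * sb Q (Suc n) = Q * Q * sb Q n ^ 3" by simp
    also have "\<dots> \<le> Q^3 * sb Q n ^ 3"
    proof -
      have "Q * Q * 1 \<le> Q * Q * Q" using Q by (intro mult_left_mono) auto
      then have "Q * Q \<le> Q^3" by (simp add: power3_eq_cube)
      then show ?thesis using s0 by (intro mult_right_mono) auto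
    qed
    also have "\<dots> = (Q * sb Q n)^3" by (simp add: power_mult_distrib)
    also have "\<dots> \<le> (Q^(3^(n+1)))^3" using Suc.IH Q s0 by (intro power_mono) auto
    also have "\<dots> = Q^(3^(Suc n + 1))" by (simp add: power_mult[symmetric] mult.commute)
    finally show ?case .
  qed
  moreover have "sb Q n \<le> Q * sb Q n" using Q sb_ge[OF Q, of n] by (simp add: mult_le_cancel_right1)
  ultimately show ?thesis by linarith
qed

theorem mainTheorem18:
  shows "\<forall>c1::real. \<exists>C::real. \<forall>c2::real. \<exists>N0::real. \<forall>N\<ge>N0.
    \<forall>(L::nat) (W::nat) (S::nat) (B::real).
      1 \<le> L \<and> real L \<le> c1 \<and> 2 \<le> W \<and> real W \<le> c2 * N \<and> 1 \<le> S \<and> real S \<le> c2 * N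
      \<and> 1 \<le> B \<and> B \<le> c2 * N \<longrightarrow>
      (\<forall>\<delta>::real. 0 < \<delta> \<and> \<delta> < 1 \<longrightarrow>
        (\<exists>n::nat. covering_number \<delta> (gradPhi L W S B :: (real^'d \<Rightarrow> real) set) sup_dist = enat n
           \<and> ln (real n) \<le> C * real S * (ln (1 / \<delta>) + 3 ^ L * ln (real W * B))))"
proof (rule allI)
  fix c1 :: real
  define d where "d = real CARD('d)"
  define c1' where "c1' = max c1 0"
  define K0 where "K0 = ln 4 + ln (d + c1' + 1) + ln 3"
  define K1 where "K1 = ln 12 + ln (d + 1)"
  define C where "C = 5 + (K0 + 3 * K1) / ln 2"
  have d0: "0 \<le> d" by (simp add: d_def)
  have c1'0: "0 \<le> c1'" by (simp add: c1'_def)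
  have K00: "0 \<le> K0" using d0 c1'0 by (simp add: K0_def)
  have K10: "0 \<le> K1" using d0 by (simp add: K1_def)
  have ln2: "0 < ln (2::real)" by simp
  have C1: "1 \<le> C" using K00 K10 ln2 by (simp add: C_def)
  show "\<exists>C::real. \<forall>c2::real. \<exists>N0::real. \<forall>N\<ge>N0.
    \<forall>(L::nat) (W::nat) (S::nat) (B::real).
      1 \<le> L \<and> real L \<le> c1 \<and> 2 \<le> W \<and> real W \<le> c2 * N \<and> 1 \<le> S \<and> real S \<le> c2 * N
      \<and> 1 \<le> B \<and> B \<le> c2 * N \<longrightarrow>
      (\<forall>\<delta>::real. 0 < \<delta> \<and> \<delta> < 1 \<longrightarrow>
        (\<exists>n::nat. covering_number \<delta> (gradPhi L W S B :: (real^'d \<Rightarrow> real) set) sup_dist = enat n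
           \<and> ln (real n) \<le> C * real S * (ln (1 / \<delta>) + 3 ^ L * ln (real W * B))))"
  proof (rule exI[of _ C], rule allI, rule exI[of _ 0], intro allI impI)
    fix c2 N :: real and L W S :: nat and B \<delta> :: real
    assume h: "1 \<le> L \<and> real L \<le> c1 \<and> 2 \<le> W \<and> real W \<le> c2 * N \<and> 1 \<le> S \<and> real S \<le> c2 * N
      \<and> 1 \<le> B \<and> B \<le> c2 * N" and hd: "0 < \<delta> \<and> \<delta> < 1"
    have L1: "1 \<le> L" and Lc: "real L \<le> c1'" and W2: "2 \<le> W" and S1: "1 \<le> S" and B1: "1 \<le> B"
      using h by (auto simp: c1'_def)
    have W1: "1 \<le> W" using W2 by simp
    have \<delta>0: "0 < \<delta>" and \<delta>1: "\<delta> < 1" using hd by auto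
    define Q where "Q = 12 * (real CARD('d) + 1) * real W * B"
    define s where "s = sb Q L"
    define \<epsilon> where "\<epsilon> = \<delta> / s"
    have ex: "\<exists>T. finite T \<and> T \<subseteq> (gradPhi L W S B :: (real^'d \<Rightarrow> real) set)
       \<and> (\<forall>g\<in>gradPhi L W S B. \<exists>t\<in>T. sup_dist g t \<le> \<delta>)
       \<and> card T \<le> (card (Idx L W :: 'd pidx set) * card (grid \<epsilon> B))^S"
      unfolding \<epsilon>_def s_def Q_def by (rule cover[OF L1 W1 B1 \<delta>0])
    then obtain T where T: "finite T" "T \<subseteq> (gradPhi L W S B :: (real^'d \<Rightarrow> real) set)"
       "\<forall>g\<in>gradPhi L W S B. \<exists>t\<in>T. sup_dist g t \<le> \<delta>"
       "card T \<le> (card (Idx L W :: 'd pidx set) * card (grid \<epsilon> B))^S"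
      by blast
    obtain n where n: "covering_number \<delta> (gradPhi L W S B :: (real^'d \<Rightarrow> real) set) sup_dist = enat n"
      "n \<le> card T" using covnum[OF T(1-3)] by blast
    define cI where "cI = card (Idx L W :: 'd pidx set)"
    define cG where "cG = card (grid \<epsilon> B)"
    have ncnt: "n \<le> (cI * cG)^S" using n(2) T(4) unfolding cI_def cG_def by linarith
    define lam where "lam = ln (real W * B)"
    define P3 where "P3 = (3::real)^L"
    define ld where "ld = ln (1 / \<delta>)"
    have ld0: "0 < ld" using \<delta>0 \<delta>1 by (simp add: ld_def)
    have lnW: "ln 2 \<le> ln (real W)" using W2 by simp
    have lnB: "0 \<le> ln B" using B1 by simp
    have lam: "lam = ln (real W) + ln B" using W2 B1 by (simp add: lam_def ln_mult)
    have P31: "1 \<le> P3" by (simp add: P3_def)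
    have lam2: "ln 2 \<le> lam" using lam lnW lnB by linarith
    have lam0: "0 \<le> lam" using lam2 ln2 by linarith
    have X: "lam \<le> P3 * lam" using mult_right_mono[OF P31 lam0] by simp
    have rhs0: "0 \<le> C * real S * (ld + P3 * lam)"
      using C1 ld0 X lam0 by (intro mult_nonneg_nonneg) auto
    show "\<exists>n::nat. covering_number \<delta> (gradPhi L W S B :: (real^'d \<Rightarrow> real) set) sup_dist = enat n
           \<and> ln (real n) \<le> C * real S * (ln (1 / \<delta>) + 3 ^ L * ln (real W * B))"
    proof (rule exI[of _ n], rule conjI[OF n(1)])
      show "ln (real n) \<le> C * real S * (ln (1 / \<delta>) + 3 ^ L * ln (real W * B))"
      proof (cases "n = 0")
        case True
        then show ?thesis using rhs0 by (simp add: ld_def P3_def lam_def)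
      next
        case False
        have pos: "0 < cI * cG"
        proof (rule ccontr)
          assume "\<not> 0 < cI * cG"
          then have z: "cI * cG = 0" by simp
          have "(cI * cG)^S = 0" unfolding z using S1 by simp
          then show False using ncnt False by linarith
        qed
        have cI0: "0 < real cI" and cG0: "0 < real cG" using pos by auto
        have cIb: "real cI \<le> 4 * (d + c1' + 1) * real W ^ 2"
        proof -
          have e: "(L+1)*(W+1)*W + (L+1)*(W+1) = (W+1)*(W+1)*(L+1)" by (simp add: algebra_simps)
          have "(W+1) * CARD('d) \<le> (W+1)*(W+1) * CARD('d)" by simp
          then have "cI \<le> (W+1)*(W+1)*CARD('d) + (W+1)*(W+1)*(L+1)"
            using card_Idx[of L W, where 'd='d] e unfolding cI_def by linarith
          then have "real cI \<le> real ((W+1)*(W+1)*CARD('d) + (W+1)*(W+1)*(L+1))"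
            by (simp only: of_nat_le_iff)
          also have "\<dots> = (real W+1)*(real W+1)*(d + real L + 1)"
            by (simp add: d_def algebra_simps)
          finally have "real cI \<le> (real W+1)*(real W+1)*(d + real L + 1)" .
          also have "\<dots> \<le> (2 * real W) * (2 * real W) * (d + c1' + 1)"
            using W1 Lc d0 by (intro mult_mono) auto
          finally show ?thesis by (simp add: power2_eq_square algebra_simps)
        qed
        have Q1: "1 \<le> Q"
          proof -
            have "12 * (real CARD('d) + 1) * 1 \<le> 12 * (real CARD('d) + 1) * real W" using W1 by (intro mult_left_mono) auto
            moreover have "0 \<le> real CARD('d)" by simp
            ultimately have "1 \<le> 12 * (real CARD('d) + 1) * real W" by (smt (verit))
            then have "1 * 1 \<le> (12 * (real CARD('d) + 1) * real W) * B" using B1 by (intro mult_mono) auto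
            then show ?thesis by (simp add: Q_def)
          qed
        have s1: "1 \<le> s" using sb_ge[OF Q1, of L] Q1 unfolding s_def by linarith
        have e0: "0 < \<epsilon>" using s1 \<delta>0 by (simp add: \<epsilon>_def)
        have cGb: "real cG \<le> 3 * B * s / \<delta>"
        proof -
          have "real cG \<le> 2 * B / \<epsilon> + 1" using grid_card[OF e0] B1 unfolding cG_def by simp
          also have "2 * B / \<epsilon> = 2 * (B * s / \<delta>)" using \<delta>0 s1 by (simp add: \<epsilon>_def field_simps)
          also have "1 \<le> B * s / \<delta>"
          proof -
            have "1 * 1 \<le> B * s" using B1 s1 by (intro mult_mono) auto
            moreover have "B * s \<le> B * s / \<delta>" using \<delta>0 \<delta>1 B1 s1
              by (simp add: le_divide_eq)
            ultimately show ?thesis by simp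
          qed
          then have "2 * (B * s / \<delta>) + 1 \<le> 3 * (B * s / \<delta>)" by simp
          finally show ?thesis by simp
        qed
        have lns: "ln s \<le> 3 * P3 * ln Q"
        proof -
          have "s \<le> Q^(3^(L+1))" using sb_pow[OF Q1] by (simp add: s_def)
          then have "ln s \<le> ln (Q^(3^(L+1)))" using s1 by simp
          also have "\<dots> = real (3^(L+1)) * ln Q" by (rule ln_realpow)
          also have "\<dots> = 3 * P3 * ln Q" by (simp add: P3_def)
          finally show ?thesis .
        qed
        have lnQ: "ln Q = K1 + lam"
        proof -
          have q: "Q = 12 * ((d+1) * (real W * B))" by (simp add: Q_def d_def algebra_simps)
          have p1: "0 < d+1" "0 < real W * B" using d0 W1 B1 by auto
          have "ln Q = ln 12 + (ln (d+1) + ln (real W * B))"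
            unfolding q using p1 by (simp add: ln_mult_pos)
          then show ?thesis by (simp add: K1_def lam_def)
        qed
        have lncI: "ln (real cI) \<le> ln 4 + ln (d + c1' + 1) + 2 * ln (real W)"
        proof -
          have "ln (real cI) \<le> ln (4 * (d + c1' + 1) * real W ^ 2)" using cIb cI0 by simp
          also have "\<dots> = ln (4 * (d + c1' + 1)) + ln (real W ^ 2)"
            by (rule ln_mult_pos) (use W1 d0 c1'0 in auto)
          also have "ln (4 * (d + c1' + 1)) = ln 4 + ln (d + c1' + 1)"
            by (rule ln_mult_pos) (use d0 c1'0 in auto)
          also have "ln (real W ^ 2) = 2 * ln (real W)" by (simp add: ln_realpow)
          finally show ?thesis .
        qed
        have lncG: "ln (real cG) \<le> ln 3 + ln B + ln s + ld"
        proof -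
          have a1: "ln (3 * B * s / \<delta>) = ln (3 * B * s) - ln \<delta>"
            by (rule ln_divide_pos) (use B1 s1 \<delta>0 in auto)
          have a2: "ln (3 * B * s) = ln (3 * B) + ln s"
            by (rule ln_mult_pos) (use B1 s1 in auto)
          have a3: "ln (3 * B) = ln 3 + ln B"
            by (rule ln_mult_pos) (use B1 in auto)
          have a4: "- ln \<delta> = ld" unfolding ld_def using \<delta>0 by (simp add: ln_divide_pos)
          have "ln (real cG) \<le> ln (3 * B * s / \<delta>)" using cGb cG0 by simp
          then show ?thesis using a1 a2 a3 a4 by linarith
        qed
        have lnn: "ln (real n) \<le> real S * (ln (real cI) + ln (real cG))"
        proof -
          have "real n \<le> (real cI * real cG)^S" 
          proof -
            have "real n \<le> real ((cI * cG)^S)" using ncnt by (simp only: of_nat_le_iff)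
            then show ?thesis by simp
          qed
          then have "ln (real n) \<le> ln ((real cI * real cG)^S)" using False by simp
          also have "\<dots> = real S * (ln (real cI) + ln (real cG))" using cI0 cG0 by (simp add: ln_realpow ln_mult)
          finally show ?thesis .
        qed
        have "3 * P3 * ln Q = 3 * P3 * K1 + 3 * (P3 * lam)" by (simp add: lnQ algebra_simps)
        then have sum: "ln (real cI) + ln (real cG) \<le> K0 + 2 * ln (real W) + ln B + 3 * P3 * K1 + 3 * (P3 * lam) + ld"
          using lncI lncG lns unfolding K0_def by linarith
        have t1: "2 * ln (real W) + ln B \<le> 2 * (P3 * lam)" using lam lnB X by linarith
        have t2: "K0 \<le> (K0 / ln 2) * (P3 * lam)"
        proof -
          have "K0 = (K0 / ln 2) * ln 2" using ln2 by simp
          also have "\<dots> \<le> (K0 / ln 2) * (P3 * lam)" using K00 ln2 lam2 X by (intro mult_left_mono) auto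
          finally show ?thesis .
        qed
        have t3: "3 * P3 * K1 \<le> (3 * K1 / ln 2) * (P3 * lam)"
        proof -
          have "3 * P3 * K1 = (3 * K1 / ln 2) * (P3 * ln 2)" using ln2 by simp
          also have "\<dots> \<le> (3 * K1 / ln 2) * (P3 * lam)" using K10 ln2 lam2 P31
            by (intro mult_left_mono) auto
          finally show ?thesis .
        qed
        have "(K0 / ln 2) * (P3 * lam) + (3 * K1 / ln 2) * (P3 * lam) + 5 * (P3 * lam) = C * (P3 * lam)"
          by (simp add: C_def algebra_simps add_divide_distrib)
        then have tot: "ln (real cI) + ln (real cG) \<le> ld + C * (P3 * lam)"
          using sum t1 t2 t3 by linarith
        have "ld + C * (P3 * lam) \<le> C * (ld + P3 * lam)" using C1 ld0 by (simp add: algebra_simps)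
        with tot have tot2: "ln (real cI) + ln (real cG) \<le> C * (ld + P3 * lam)" by linarith
        have "real S * (ln (real cI) + ln (real cG)) \<le> real S * (C * (ld + P3 * lam))"
          using tot2 by (intro mult_left_mono) auto
        with lnn show ?thesis by (simp add: ld_def P3_def lam_def algebra_simps)
      qed
    qed
  qed
qed

end
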